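(* Let $\gamma$ be non-decreasing with $\gamma\in L^2(0,1)$, $\int_0^1\gamma=1$ and $\gamma\not\equiv1$. Let $\mu\in\mathbb R$ and $\sigma>0$, and let $c_0=\operatorname{corr}(F^{-1}(U),\gamma(U))<1$. Assume $$(\mu_F-\mu)^2+(\sigma_F-\sigma)^2<\varepsilon\le(\mu_F-\mu)^2+(\sigma_F-\sigma)^2+2\sigma\sigma_F(1-c_0).$$ Put $$K=\tfrac12\big(\mu_F^2+\sigma_F^2+\mu^2+\sigma^2-2\mu\mu_F-\varepsilon\big),\qquad V=\operatorname{var}(\gamma(U)),\qquad C_{\gamma,F}=\operatorname{cov}(F^{-1}(U),\gamma(U)),$$ $$\Delta=\frac{K^2(C_{\gamma,F}^2-V\sigma_F^2)}{K^2-\sigma^2\sigma_F^2}.$$ Then $K\ge0$ and $\Delta\ge0$. Moreover, the unique $\lambda\ge0$ with $$d_W(F^{-1},h_\lambda)^2=\mathbb E\big((F^{-1}(U)-h_\lambda(U))^2\big)=\varepsilon$$ is $$\lambda=\frac{\sqrt\Delta-C_{\gamma,F}}{\sigma_F^2}.$$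
   Context: $U\sim\mathcal U(0,1)$. $F$ is a reference distribution function with finite second moment, mean $\mu_F$, standard deviation $\sigma_F>0$, and quantile function $F^{-1}(u)=\inf\{y:F(y)\ge u\}$. For $\lambda\ge0$, $$h_\lambda(u)=\mu+\sigma\,\frac{\gamma(u)+\lambda F^{-1}(u)-a_\lambda}{b_\lambda},$$ with $a_\lambda=\mathbb E(\gamma(U)+\lambda F^{-1}(U))$ and $b_\lambda=\operatorname{std}(\gamma(U)+\lambda F^{-1}(U))$. $d_W(G_1^{-1},G_2^{-1})=\big(\int_0^1(G_1^{-1}-G_2^{-1})^2\big)^{1/2}$. *)

theory Defs
  imports "HOL-Probability.Probability"
begin

text \<open>Expectation of f(U) for U uniform on (0,1).\<close>
definition EU :: "(real \<Rightarrow> real) \<Rightarrow> real" where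
  "EU f = (LBINT u:{0<..<1}. f u)"

definition covU :: "(real \<Rightarrow> real) \<Rightarrow> (real \<Rightarrow> real) \<Rightarrow> real" where
  "covU f g = EU (\<lambda>u. (f u - EU f) * (g u - EU g))"

definition varU :: "(real \<Rightarrow> real) \<Rightarrow> real" where
  "varU f = covU f f"

definition stdU :: "(real \<Rightarrow> real) \<Rightarrow> real" where
  "stdU f = sqrt (varU f)"

definition corrU :: "(real \<Rightarrow> real) \<Rightarrow> (real \<Rightarrow> real) \<Rightarrow> real" where
  "corrU f g = covU f g / (stdU f * stdU g)"

text \<open>Generalized inverse (quantile function) of a distribution function F.\<close>
definition quantile :: "(real \<Rightarrow> real) \<Rightarrow> real \<Rightarrow> real" where
  "quantile F u = Inf {y. F y \<ge> u}"

definition hfun :: "(real \<Rightarrow> real) \<Rightarrow> (real \<Rightarrow> real) \<Rightarrow> real \<Rightarrow> real \<Rightarrow> real \<Rightarrow> real \<Rightarrow> real" where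
  "hfun \<gamma> Q \<mu> \<sigma> lam u =
     (let g = (\<lambda>v. \<gamma> v + lam * Q v) in \<mu> + \<sigma> * (g u - EU g) / stdU g)"

text \<open>Wasserstein-2 distance between two quantile functions.\<close>
definition dW :: "(real \<Rightarrow> real) \<Rightarrow> (real \<Rightarrow> real) \<Rightarrow> real" where
  "dW G1 G2 = sqrt (LBINT u:{0<..<1}. (G1 u - G2 u)^2)"

end

theory Submission
  imports Defs
begin


definition NN :: "real measure" where "NN = restrict_space lborel {0<..<1}"

lemma space_NN[simp]: "space NN = {0<..<1}"
  by (simp add: NN_def space_restrict_space)

lemma prob_NN: "prob_space NN"
  unfolding NN_def
  by (auto simp add: emeasure_restrict_space space_restrict_space intro!: prob_spaceI)

lemma EU_NN: "EU f = integral\<^sup>L NN f"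
  unfolding EU_def set_lebesgue_integral_def NN_def
  by (subst integral_restrict_space) auto

lemma setint_NN: "set_integrable lborel {0<..<1} (f::real\<Rightarrow>real) \<longleftrightarrow> integrable NN f"
  unfolding set_integrable_def NN_def
  using integrable_restrict_space[of "{0<..<1}" lborel f] by simp

lemma meas_NN: "f \<in> borel_measurable (restrict_space borel {0<..<1}) \<Longrightarrow> f \<in> borel_measurable NN"
  unfolding NN_def
  by (simp add: measurable_def sets_restrict_space space_restrict_space)

lemma ab_bound: "\<bar>a*b\<bar> \<le> \<bar>(a::real)\<^sup>2 + b\<^sup>2\<bar>"
proof -
  have "2*\<bar>a\<bar>*\<bar>b\<bar> \<le> \<bar>a\<bar>\<^sup>2 + \<bar>b\<bar>\<^sup>2" by (rule sum_squares_bound)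
  moreover have "0 \<le> \<bar>a\<bar>*\<bar>b\<bar>" by simp
  ultimately have "\<bar>a\<bar>*\<bar>b\<bar> \<le> \<bar>a\<bar>\<^sup>2 + \<bar>b\<bar>\<^sup>2" by linarith
  then show ?thesis by (simp add: abs_mult)
qed

lemma x_bound: "\<bar>x\<bar> \<le> 1 + x*(x::real)"
proof (cases "\<bar>x\<bar> \<le> 1")
  case True then show ?thesis using zero_le_square[of x] by linarith
next
  case False
  then have "\<bar>x\<bar> * 1 \<le> \<bar>x\<bar>*\<bar>x\<bar>" by (intro mult_left_mono) auto
  then show ?thesis by (simp add: abs_mult_self_eq)
qed

lemma int_sq_bound:
  fixes f :: "real \<Rightarrow> real"
  assumes "integrable NN (\<lambda>u. (f u)^2)" "f \<in> borel_measurable NN"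
  shows "integrable NN f"
proof -
  interpret prob_space NN by (rule prob_NN)
  show ?thesis
    apply (rule Bochner_Integration.integrable_bound[where f="\<lambda>u. 1 + (f u)^2"])
    using assms apply auto
    apply (rule AE_I2)
    using x_bound by (simp add: power2_eq_square)
qed

lemma int_prod_bound:
  fixes f g :: "real \<Rightarrow> real"
  assumes "integrable NN (\<lambda>u. (f u)^2)" "integrable NN (\<lambda>u. (g u)^2)"
     "f \<in> borel_measurable NN" "g \<in> borel_measurable NN"
  shows "integrable NN (\<lambda>u. f u * g u)"
  apply (rule Bochner_Integration.integrable_bound[where f="\<lambda>u. (f u)^2 + (g u)^2"])
  using assms apply auto
  apply (rule AE_I2)
  using ab_bound by simp



lemma measure_NN[simp]: "measure NN {0<..<1} = 1"
  using prob_space.prob_space[OF prob_NN] by simp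

locale mom =
  fixes Q g :: "real \<Rightarrow> real"
  assumes mQ: "Q \<in> borel_measurable NN" and mg: "g \<in> borel_measurable NN"
    and iQ2: "integrable NN (\<lambda>u. (Q u)^2)" and ig2: "integrable NN (\<lambda>u. (g u)^2)"
begin

lemma iQ: "integrable NN Q" using int_sq_bound mQ iQ2 by blast
lemma ig: "integrable NN g" using int_sq_bound mg ig2 by blast
lemma iQg: "integrable NN (\<lambda>u. Q u * g u)" using int_prod_bound mQ iQ2 mg ig2 by blast

lemma iconst: "integrable NN (\<lambda>u. c::real)"
proof -
  interpret prob_space NN by (rule prob_NN)
  show ?thesis by simp
qed

lemma int_const: "integral\<^sup>L NN (\<lambda>u. c) = (c::real)"
proof -
  interpret prob_space NN by (rule prob_NN)
  show ?thesis by simp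
qed

lemma lin: "EU (\<lambda>u. a + b*Q u + c*g u) = a + b*EU Q + c*EU g"
  unfolding EU_NN
  using iQ ig iconst
  by (simp add: int_const)

lemma quad: "EU (\<lambda>u. (a + b*Q u + c*g u) * (a' + b'*Q u + c'*g u)) =
   a*a' + (a*b'+b*a')*EU Q + (a*c'+c*a')*EU g + b*b'*EU (\<lambda>u. (Q u)^2)
   + (b*c'+c*b')*EU (\<lambda>u. Q u * g u) + c*c'*EU (\<lambda>u. (g u)^2)"
proof -
  have eq: "(\<lambda>u. (a + b*Q u + c*g u) * (a' + b'*Q u + c'*g u)) = (\<lambda>u. a*a' + ((a*b'+b*a')*Q u + ((a*c'+c*a')*g u + (b*b'*(Q u)^2 + ((b*c'+c*b')*(Q u * g u) + c*c'*(g u)^2)))))"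
    by (rule ext) (simp add: algebra_simps power2_eq_square)
  show ?thesis unfolding EU_NN eq
    using iQ ig iconst iQg iQ2 ig2
    by (simp add: int_const)
qed

lemma sqnn: "0 \<le> EU (\<lambda>u. (a + b*Q u + c*g u)^2)"
  unfolding EU_NN by (rule integral_nonneg_AE) simp

lemma quad2: "EU (\<lambda>u. (a + b*Q u + c*g u)^2) =
   a*a + (a*b+b*a)*EU Q + (a*c+c*a)*EU g + b*b*EU (\<lambda>u. (Q u)^2)
   + (b*c+c*b)*EU (\<lambda>u. Q u * g u) + c*c*EU (\<lambda>u. (g u)^2)"
  using quad[of a b c a b c] by (simp add: power2_eq_square)

end


lemma AE_NN_lborel: "(AE u in NN. P u) \<Longrightarrow> AE u in lborel. u \<in> {0<..<1} \<longrightarrow> P u"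
  unfolding NN_def using AE_restrict_space_iff[of "{0<..<1::real}" lborel P] by simp

lemma AE_interval_False:
  assumes "AE v in lborel. v \<notin> {a<..<b}" "a < (b::real)"
  shows False
proof -
  have s: "{x\<in>space lborel. \<not> (x \<notin> {a<..<b})} = {a<..<b}" by auto
  have "emeasure lborel {a<..<b} = 0"
    using iffD1[OF AE_iff_measurable[OF _ s] assms(1)] by simp
  then show False using assms(2) by simp
qed

lemma mono_AE_const:
  fixes g :: "real \<Rightarrow> real"
  assumes mono: "mono_on {0<..<1} g" and AE: "AE u in NN. g u = c"
  shows "\<forall>u\<in>{0<..<1}. g u = c"
proof
  fix u :: real assume u: "u \<in> {0<..<1}"
  have AE': "AE v in lborel. v \<in> {0<..<1} \<longrightarrow> g v = c" using AE_NN_lborel[OF AE] .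
  show "g u = c"
  proof (rule ccontr)
    assume ne: "g u \<noteq> c"
    show False
    proof (cases "g u > c")
      case True
      have "AE v in lborel. v \<notin> {u<..<1}"
        using AE'
      proof (rule AE_mp, intro AE_I2 impI)
        fix v assume h: "v \<in> {0<..<1} \<longrightarrow> g v = c"
        show "v \<notin> {u<..<1}"
        proof
          assume v: "v \<in> {u<..<1}"
          have "g u \<le> g v" using mono_onD[OF mono, of u v] u v by simp
          moreover have "g v = c" using h v u by simp
          ultimately show False using True by linarith
        qed
      qed
      then show False using AE_interval_False[of u 1] u by simp
    next
      case False
      then have lt: "g u < c" using ne by auto
      have "AE v in lborel. v \<notin> {0<..<u}"
        using AE'
      proof (rule AE_mp, intro AE_I2 impI)
        fix v assume h: "v \<in> {0<..<1} \<longrightarrow> g v = c"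
        show "v \<notin> {0<..<u}"
        proof
          assume v: "v \<in> {0<..<u}"
          have "g v \<le> g u" using mono_onD[OF mono, of v u] u v by simp
          moreover have "g v = c" using h v u by simp
          ultimately show False using lt by linarith
        qed
      qed
      then show False using AE_interval_False[of 0 u] u by simp
    qed
  qed
qed



locale mom2 = mom +
  assumes Qmono: "mono_on {0<..<1} Q" and gmono: "mono_on {0<..<1} g"
    and g1: "EU g = 1" and nonconst: "\<not> (\<forall>u\<in>{0<..<1}. g u = 1)"
begin

lemma no_AE1: "\<not> (AE u in NN. g u = 1)"
  using mono_AE_const[OF gmono] nonconst by blast

lemma zero_int_AE:
  assumes "integrable NN f" "\<And>u. u \<in> {0<..<1} \<Longrightarrow> 0 \<le> f u" "integral\<^sup>L NN f = 0"
  shows "AE u in NN. f u = (0::real)"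
proof -
  have "AE x in NN. 0 \<le> f x" using assms(2) by (intro AE_I2) simp
  then show ?thesis using integral_nonneg_eq_0_iff_AE[of NN f] assms(1,3) by blast
qed

lemma V_pos: "0 < varU g"
proof -
  have i: "integrable NN (\<lambda>u. (g u - EU g) * (g u - EU g))"
  proof -
    have "(\<lambda>u. (g u - EU g) * (g u - EU g)) = (\<lambda>u. (g u)^2 + (- 2 * EU g) * g u + EU g * EU g)"
      by (rule ext) (simp add: algebra_simps power2_eq_square)
    then show ?thesis using ig2 ig iconst by simp
  qed
  have nn: "0 \<le> varU g" unfolding varU_def covU_def EU_NN
    by (rule integral_nonneg_AE) simp
  moreover have "varU g \<noteq> 0"
  proof
    assume "varU g = 0"
    then have "AE u in NN. (g u - EU g) * (g u - EU g) = 0"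
      using i by (intro zero_int_AE) (auto simp: varU_def covU_def EU_NN)
    then have "AE u in NN. g u = 1" by (rule AE_mp) (auto intro!: AE_I2 simp: g1)
    then show False using no_AE1 by blast
  qed
  ultimately show ?thesis by linarith
qed

lemma cov_shift: "EU (\<lambda>u. (Q u - c) * (g u - 1)) = covU Q g"
proof -
  have "EU (\<lambda>u. (Q u - c) * (g u - 1)) = EU (\<lambda>u. ((-c) + 1*Q u + 0*g u) * ((-1) + 0*Q u + 1*g u))"
    by simp
  also have "\<dots> = EU (\<lambda>u. Q u * g u) - EU Q"
    unfolding quad using g1 by (simp add: algebra_simps)
  moreover have "covU Q g = EU (\<lambda>u. ((- EU Q) + 1*Q u + 0*g u) * ((-1) + 0*Q u + 1*g u))"
    unfolding covU_def g1 by simp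
  moreover have "\<dots> = EU (\<lambda>u. Q u * g u) - EU Q"
    unfolding quad using g1 by (simp add: algebra_simps)
  ultimately show ?thesis by simp
qed

lemma cheb: "0 \<le> covU Q g"
proof -
  define S where "S = {u\<in>{0<..<1}. g u \<le> 1}"
  show ?thesis
  proof (cases "S = {}")
    case True
    then have pos: "\<And>u. u \<in> {0<..<1} \<Longrightarrow> 0 \<le> g u - 1" unfolding S_def by force
    have "EU (\<lambda>u. (-1) + 0 * Q u + 1 * g u) = 0" unfolding lin g1 by simp
    then have "AE u in NN. g u - 1 = 0"
      using pos ig iconst by (intro zero_int_AE) (auto simp: EU_NN)
    then have "AE u in NN. g u = 1" by (rule AE_mp) (auto intro!: AE_I2)
    then show ?thesis using no_AE1 by blast
  next
    case False
    then obtain s where s: "s \<in> S" by blast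
    show ?thesis
    proof (cases "S = {0<..<1}")
      case True
      then have pos: "\<And>u. u \<in> {0<..<1} \<Longrightarrow> 0 \<le> 1 - g u" unfolding S_def by force
      have "EU (\<lambda>u. 1 + 0 * Q u + (-1) * g u) = 0" unfolding lin g1 by simp
      then have "AE u in NN. 1 - g u = 0"
        using pos ig iconst by (intro zero_int_AE) (auto simp: EU_NN)
      then have "AE u in NN. g u = 1" by (rule AE_mp) (auto intro!: AE_I2)
      then show ?thesis using no_AE1 by blast
    next
      case False
      then obtain t where t: "t \<in> {0<..<1}" "t \<notin> S" unfolding S_def by blast
      have gt: "g t > 1" using t unfolding S_def by auto
      have below: "u < v" if "u \<in> S" "v \<in> {0<..<1}" "v \<notin> S" for u v
      proof (rule ccontr)
        assume "\<not> u < v"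
        then have "g v \<le> g u" using mono_onD[OF gmono, of v u] that unfolding S_def by auto
        then show False using that unfolding S_def by auto
      qed
      define c where "c = Sup (Q ` S)"
      have bdd: "bdd_above (Q ` S)"
      proof (rule bdd_aboveI2)
        fix u assume "u \<in> S"
        then show "Q u \<le> Q t" using below[of u t] t mono_onD[OF Qmono, of u t] unfolding S_def by auto
      qed
      have le1: "Q u \<le> c" if "u \<in> S" for u
        unfolding c_def using bdd that by (intro cSup_upper) auto
      have ge1: "c \<le> Q v" if "v \<in> {0<..<1}" "v \<notin> S" for v
        unfolding c_def using s
      proof (intro cSup_least)
        fix x assume "x \<in> Q ` S"
        then obtain u where "u \<in> S" "x = Q u" by auto
        then show "x \<le> Q v" using below[of u v] that mono_onD[OF Qmono, of u v] unfolding S_def by auto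
      qed auto
      have "0 \<le> EU (\<lambda>u. (Q u - c) * (g u - 1))"
        unfolding EU_NN
      proof (rule integral_nonneg_AE, rule AE_I2)
        fix u assume u: "u \<in> space NN"
        show "0 \<le> (Q u - c) * (g u - 1)"
        proof (cases "u \<in> S")
          case True
          then have "Q u - c \<le> 0" "g u - 1 \<le> 0" using le1 unfolding S_def by auto
          then show ?thesis by (simp add: mult_nonpos_nonpos)
        next
          case False
          then have "0 \<le> Q u - c" "0 \<le> g u - 1" using ge1 u unfolding S_def by auto
          then show ?thesis by simp
        qed
      qed
      then show ?thesis using cov_shift by simp
    qed
  qed
qed

end


lemma quantile_facts:
  assumes M: "real_distribution M"
  shows "quantile (cdf M) \<in> borel_measurable NN"
    and "distr NN borel (quantile (cdf M)) = M"
    and "mono_on {0<..<1} (quantile (cdf M))"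
proof -
  interpret cdf_distribution M using M unfolding cdf_distribution_def .
  have Qe: "quantile (cdf M) = (\<lambda>\<omega>. Inf {x. \<omega> \<le> cdf M x})"
    unfolding quantile_def by (rule ext) simp
  show "quantile (cdf M) \<in> borel_measurable NN"
    unfolding Qe by (rule meas_NN) (rule measurable_CI)
  show "distr NN borel (quantile (cdf M)) = M"
    unfolding Qe NN_def by (rule distr_I_eq_M)
  show "mono_on {0<..<1} (quantile (cdf M))"
    unfolding Qe by (rule mono_I)
qed

lemma transfer_int:
  fixes f :: "real \<Rightarrow> real"
  assumes M: "real_distribution M" and f: "f \<in> borel_measurable borel"
  shows "integral\<^sup>L M f = integral\<^sup>L NN (\<lambda>u. f (quantile (cdf M) u))"
    and "integrable M f \<longleftrightarrow> integrable NN (\<lambda>u. f (quantile (cdf M) u))"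
proof -
  note q = quantile_facts[OF M]
  have mq: "quantile (cdf M) \<in> measurable NN borel" using q(1) by simp
  show "integral\<^sup>L M f = integral\<^sup>L NN (\<lambda>u. f (quantile (cdf M) u))"
    using integral_distr[OF mq f] q(2) by simp
  show "integrable M f \<longleftrightarrow> integrable NN (\<lambda>u. f (quantile (cdf M) u))"
    using integrable_distr_eq[OF mq f] q(2) by simp
qed



lemma dW_alg:
  fixes s V l C S2 m1 m2 g2 p \<mu> \<sigma> :: real
  assumes s: "s > 0" "s^2 = V + 2*l*C + l^2*S2" and e: "m2 = S2 + m1^2" "g2 = V + 1" "p = C + m1"
  defines "k \<equiv> \<sigma> / s"
  defines "a \<equiv> - \<mu> + k*(1 + l*m1)" and "b \<equiv> 1 - k*l" and "c \<equiv> - k"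
  shows "a*a + (a*b+b*a)*m1 + (a*c+c*a)*1 + b*b*m2 + (b*c+c*b)*p + c*c*g2
     = (m1-\<mu>)^2 + S2 + \<sigma>^2 - 2*\<sigma>*(C+l*S2)/s"
proof -
  have 1: "a*a + (a*b+b*a)*m1 + (a*c+c*a)*1 + b*b*m2 + (b*c+c*b)*p + c*c*g2
     = (m1-\<mu>)^2 + S2 + k^2*(V + 2*l*C + l^2*S2) - 2*k*(C+l*S2)"
    unfolding a_def b_def c_def e by (simp add: algebra_simps power2_eq_square)
  have 2: "k^2*(V + 2*l*C + l^2*S2) = \<sigma>^2" unfolding s(2)[symmetric] k_def using s(1)
    by (simp add: power_divide)
  have 3: "2*k*(C+l*S2) = 2*\<sigma>*(C+l*S2)/s" unfolding k_def by simp
  show ?thesis using 1 2 3 by simp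
qed

lemma solve_alg:
  fixes S2 V C \<sigma> K :: real
  assumes S2: "S2 > 0" and V: "V > 0" and C: "C \<ge> 0" and CS: "C^2 \<le> V*S2"
    and sig: "\<sigma> > 0" and K0: "K \<ge> 0" and Klt: "K < \<sigma> * sqrt S2"
    and Kc: "K * sqrt V \<ge> \<sigma> * C"
  defines "\<Delta> \<equiv> K^2 * (C^2 - V * S2) / (K^2 - \<sigma>^2 * S2)"
  shows "\<Delta> \<ge> 0" "(sqrt \<Delta> - C) / S2 \<ge> 0"
    "\<And>l. l \<ge> 0 \<Longrightarrow> \<sigma>*(C + l*S2) = K * sqrt (V + 2*l*C + l^2*S2) \<longleftrightarrow> l = (sqrt \<Delta> - C) / S2"
proof -
  have Ksq: "K^2 < \<sigma>^2 * S2"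
  proof -
    have "K^2 < (\<sigma> * sqrt S2)^2" using K0 Klt by (intro power_strict_mono) auto
    then show ?thesis using S2 by (simp add: power_mult_distrib)
  qed
  have den: "K^2 - \<sigma>^2 * S2 < 0" using Ksq by simp
  show D0: "\<Delta> \<ge> 0" unfolding \<Delta>_def using den CS
    by (intro divide_nonpos_neg) (auto intro: mult_nonneg_nonpos)
  have KV: "K^2 * V \<ge> \<sigma>^2 * C^2"
  proof -
    have "(\<sigma> * C)^2 \<le> (K * sqrt V)^2" using Kc sig C by (intro power_mono) auto
    then show ?thesis using V by (simp add: power_mult_distrib)
  qed
  have DC: "\<Delta> - C^2 = S2 * (\<sigma>^2*C^2 - K^2*V) / (K^2 - \<sigma>^2 * S2)"
    unfolding \<Delta>_def using den by (simp add: field_simps)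
  have "\<Delta> - C^2 \<ge> 0" unfolding DC using den KV S2
    by (intro divide_nonpos_neg mult_nonneg_nonpos) auto
  then have "C^2 \<le> \<Delta>" by simp
  then have "sqrt (C^2) \<le> sqrt \<Delta>" by (rule real_sqrt_le_mono)
  then have sC: "C \<le> sqrt \<Delta>" using C by simp
  then show "(sqrt \<Delta> - C) / S2 \<ge> 0" using S2 by simp
  have key: "\<Delta> * (\<sigma>^2 * S2 - K^2) = K^2 * (V*S2 - C^2)"
    unfolding \<Delta>_def using den by (simp add: field_simps)
  fix l :: real assume l: "l \<ge> 0"
  define t where "t = C + l*S2"
  have t0: "t \<ge> 0" unfolding t_def using C l S2 by simp
  have q: "V + 2*l*C + l^2*S2 = V + (t^2 - C^2)/S2"
    unfolding t_def using S2 by (simp add: field_simps power2_eq_square)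
  have qpos: "V + 2*l*C + l^2*S2 > 0" using V l C S2 by (simp add: add_pos_nonneg)
  show "\<sigma>*(C + l*S2) = K * sqrt (V + 2*l*C + l^2*S2) \<longleftrightarrow> l = (sqrt \<Delta> - C) / S2"
  proof
    assume h: "\<sigma>*(C + l*S2) = K * sqrt (V + 2*l*C + l^2*S2)"
    then have "(\<sigma>*t)^2 = K^2 * (V + 2*l*C + l^2*S2)"
      unfolding t_def using qpos by (simp add: power_mult_distrib)
    then have "\<sigma>^2*t^2*S2 = K^2 * (V*S2 + t^2 - C^2)" unfolding q using S2
      by (simp add: field_simps power_mult_distrib)
    then have "t^2 * (\<sigma>^2 * S2 - K^2) = K^2 * (V*S2 - C^2)" by (simp add: algebra_simps)
    then have "t^2 * (\<sigma>^2 * S2 - K^2) = \<Delta> * (\<sigma>^2 * S2 - K^2)" using key by simp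
    then have "t^2 = \<Delta>" using den by simp
    then have "t = sqrt \<Delta>" using t0 by (metis real_sqrt_abs abs_of_nonneg)
    then show "l = (sqrt \<Delta> - C) / S2" unfolding t_def using S2 by (simp add: field_simps)
  next
    assume "l = (sqrt \<Delta> - C) / S2"
    then have tD: "t = sqrt \<Delta>" unfolding t_def using S2 by (simp add: field_simps)
    have "(\<sigma>*t)^2 = (K * sqrt (V + 2*l*C + l^2*S2))^2"
    proof -
      have "(\<sigma>*t)^2 = \<sigma>^2 * \<Delta>" using tD D0 by (simp add: power_mult_distrib)
      also have "\<dots> = K^2 * (V + (\<Delta> - C^2)/S2)"
        using key S2 by (simp add: field_simps)
      also have "\<dots> = (K * sqrt (V + 2*l*C + l^2*S2))^2"
        using qpos unfolding q tD using D0 by (simp add: power_mult_distrib)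
      finally show ?thesis .
    qed
    moreover have "\<sigma>*t \<ge> 0" using sig t0 by simp
    moreover have "K * sqrt (V + 2*l*C + l^2*S2) \<ge> 0" using K0 qpos by simp
    ultimately show "\<sigma>*(C + l*S2) = K * sqrt (V + 2*l*C + l^2*S2)"
      unfolding t_def by (meson power2_eq_imp_eq)
  qed
qed



lemma (in mom) varq:
  "EU (\<lambda>u. ((-1 - x*EU Q) + x*Q u + 1*g u)^2) =
   (EU (\<lambda>u. (g u)^2) - 1) + 2*x*(EU (\<lambda>u. Q u * g u) - EU Q) + x^2*(EU (\<lambda>u. (Q u)^2) - (EU Q)^2)"
  if "EU g = 1"
  unfolding quad2 using that by (simp add: algebra_simps power2_eq_square)

theorem lemmaB3:
  fixes M :: "real measure" and \<gamma> :: "real \<Rightarrow> real"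
    and \<mu> \<sigma> \<epsilon> :: real
  defines "Q \<equiv> quantile (cdf M)"
  defines "\<mu>F \<equiv> (\<integral>x. x \<partial>M)"
  defines "\<sigma>F \<equiv> sqrt (\<integral>x. (x - \<mu>F)^2 \<partial>M)"
  defines "c0 \<equiv> corrU Q \<gamma>"
  defines "K \<equiv> (\<mu>F^2 + \<sigma>F^2 + \<mu>^2 + \<sigma>^2 - 2 * \<mu> * \<mu>F - \<epsilon>) / 2"
  defines "V \<equiv> varU \<gamma>"
  defines "C \<equiv> covU Q \<gamma>"
  defines "\<Delta> \<equiv> K^2 * (C^2 - V * \<sigma>F^2) / (K^2 - \<sigma>^2 * \<sigma>F^2)"
  assumes M: "real_distribution M"
    and second_moment: "integrable M (\<lambda>x. x^2)"
    and \<sigma>F_pos: "\<sigma>F > 0"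
    and \<gamma>_mono: "mono_on {0<..<1} \<gamma>"
    and \<gamma>_meas: "set_borel_measurable lborel {0<..<1} \<gamma>"
    and \<gamma>_L2: "set_integrable lborel {0<..<1} (\<lambda>u. (\<gamma> u)^2)"
    and \<gamma>_int: "EU \<gamma> = 1"
    and \<gamma>_nonconst: "\<not> (\<forall>u\<in>{0<..<1}. \<gamma> u = 1)"
    and \<sigma>_pos: "\<sigma> > 0"
    and c0_lt: "c0 < 1"
    and eps_lower: "(\<mu>F - \<mu>)^2 + (\<sigma>F - \<sigma>)^2 < \<epsilon>"
    and eps_upper: "\<epsilon> \<le> (\<mu>F - \<mu>)^2 + (\<sigma>F - \<sigma>)^2 + 2 * \<sigma> * \<sigma>F * (1 - c0)"
  shows "K \<ge> 0 \<and> \<Delta> \<ge> 0 \<and>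
    (let lam0 = (sqrt \<Delta> - C) / \<sigma>F^2 in
      lam0 \<ge> 0 \<and> (dW Q (hfun \<gamma> Q \<mu> \<sigma> lam0))^2 = \<epsilon> \<and>
      (\<forall>lam\<ge>0. (dW Q (hfun \<gamma> Q \<mu> \<sigma> lam))^2 = \<epsilon> \<longrightarrow> lam = lam0))"
proof -
  interpret rd: real_distribution M by (rule M)
  note q = quantile_facts[OF M]
  have mQ: "Q \<in> borel_measurable NN" unfolding Q_def by (rule q(1))
  have mg: "\<gamma> \<in> borel_measurable NN"
    by (rule meas_NN, rule borel_measurable_mono_on_fnc, rule \<gamma>_mono)
  have iQ2: "integrable NN (\<lambda>u. (Q u)^2)"
    using transfer_int(2)[OF M, of "\<lambda>x. x^2"] second_moment unfolding Q_def by simp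
  have ig2: "integrable NN (\<lambda>u. (\<gamma> u)^2)" using \<gamma>_L2 setint_NN by blast
  interpret mm: mom2 Q \<gamma>
    using mQ mg iQ2 ig2 q(3) \<gamma>_mono \<gamma>_int \<gamma>_nonconst unfolding Q_def
    by unfold_locales auto
  define m1 where "m1 = EU Q"
  define m2 where "m2 = EU (\<lambda>u. (Q u)^2)"
  define p where "p = EU (\<lambda>u. Q u * \<gamma> u)"
  define g2 where "g2 = EU (\<lambda>u. (\<gamma> u)^2)"
  have m1e: "\<mu>F = m1"
    unfolding \<mu>F_def m1_def EU_NN using transfer_int(1)[OF M, of "\<lambda>x. x"] unfolding Q_def by simp
  have "integral\<^sup>L M (\<lambda>x. (x - \<mu>F)^2) = EU (\<lambda>u. (Q u - \<mu>F)^2)"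
    unfolding EU_NN using transfer_int(1)[OF M, of "\<lambda>x. (x - \<mu>F)^2"] unfolding Q_def by simp
  also have "\<dots> = EU (\<lambda>u. ((-\<mu>F) + 1*Q u + 0*\<gamma> u)^2)" by simp
  also have "\<dots> = m2 - m1^2" unfolding mm.quad2 m1e m1_def m2_def by (simp add: power2_eq_square)
  finally have var_int: "integral\<^sup>L M (\<lambda>x. (x - \<mu>F)^2) = m2 - m1^2" .
  have S2: "\<sigma>F^2 = m2 - m1^2"
  proof -
    have "0 \<le> integral\<^sup>L M (\<lambda>x. (x - \<mu>F)^2)" by (rule integral_nonneg_AE) simp
    then show ?thesis unfolding \<sigma>F_def using var_int by simp
  qed
  have Ve: "V = g2 - 1"
  proof -
    have "V = EU (\<lambda>u. ((-1) + 0*Q u + 1*\<gamma> u) * ((-1) + 0*Q u + 1*\<gamma> u))"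
      unfolding V_def varU_def covU_def \<gamma>_int by simp
    then show ?thesis unfolding mm.quad g2_def \<gamma>_int by simp
  qed
  have Ce: "C = p - m1"
  proof -
    have "C = EU (\<lambda>u. ((-m1) + 1*Q u + 0*\<gamma> u) * ((-1) + 0*Q u + 1*\<gamma> u))"
      unfolding C_def covU_def \<gamma>_int m1_def by simp
    then show ?thesis unfolding mm.quad p_def m1_def \<gamma>_int by simp
  qed
  have VQ: "varU Q = \<sigma>F^2"
  proof -
    have "varU Q = EU (\<lambda>u. ((-m1) + 1*Q u + 0*\<gamma> u) * ((-m1) + 1*Q u + 0*\<gamma> u))"
      unfolding varU_def covU_def m1_def by simp
    then show ?thesis unfolding mm.quad S2 m2_def m1_def by (simp add: power2_eq_square)
  qed
  have sQ: "stdU Q = \<sigma>F" unfolding stdU_def VQ using \<sigma>F_pos by simp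
  have Vpos: "V > 0" unfolding V_def by (rule mm.V_pos)
  have Cnn: "C \<ge> 0" unfolding C_def by (rule mm.cheb)
  have vq: "EU (\<lambda>u. ((-1 - x*m1) + x*Q u + 1*\<gamma> u)^2) = V + 2*x*C + x^2*\<sigma>F^2" for x
    using mm.varq[OF \<gamma>_int, of x] unfolding Ve Ce S2 m1_def m2_def p_def g2_def .
  have CS: "C^2 \<le> V * \<sigma>F^2"
  proof -
    have "0 \<le> V + 2*(-C/\<sigma>F^2)*C + (-C/\<sigma>F^2)^2*\<sigma>F^2"
      using mm.sqnn vq by metis
    also have "\<dots> = V - C^2/\<sigma>F^2" using \<sigma>F_pos by (simp add: field_simps power2_eq_square)
    finally show ?thesis using \<sigma>F_pos by (simp add: field_simps)
  qed
  have c0e: "c0 = C / (\<sigma>F * sqrt V)" unfolding c0_def corrU_def C_def V_def using sQ by (simp add: stdU_def)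
  have K2: "2*K = (\<mu>F - \<mu>)^2 + \<sigma>F^2 + \<sigma>^2 - \<epsilon>" unfolding K_def by (simp add: power2_diff field_simps)
  have Klt: "K < \<sigma> * sqrt (\<sigma>F^2)"
    using eps_lower K2 \<sigma>F_pos by (simp add: power2_eq_square algebra_simps)
  have Kge: "K \<ge> \<sigma> * \<sigma>F * c0"
    using eps_upper K2 by (simp add: power2_eq_square algebra_simps)
  have sV: "sqrt V > 0" using Vpos by simp
  have Kc: "K * sqrt V \<ge> \<sigma> * C"
  proof -
    have "\<sigma> * \<sigma>F * c0 * sqrt V = \<sigma> * C" unfolding c0e using \<sigma>F_pos sV by (simp add: field_simps)
    then show ?thesis using Kge sV by (metis mult_right_mono less_imp_le)
  qed
  have K0: "K \<ge> 0"
  proof -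
    have "c0 \<ge> 0" unfolding c0e using Cnn \<sigma>F_pos sV by simp
    then show ?thesis using Kge \<sigma>_pos \<sigma>F_pos by (smt (verit) mult_nonneg_nonneg)
  qed
  have S2pos: "\<sigma>F^2 > 0" using \<sigma>F_pos by simp
  note sol = solve_alg[OF S2pos Vpos Cnn CS \<sigma>_pos K0 Klt Kc, folded \<Delta>_def]
  have dWe: "(dW Q (hfun \<gamma> Q \<mu> \<sigma> lam))^2 = \<epsilon> \<longleftrightarrow>
       \<sigma>*(C + lam*\<sigma>F^2) = K * sqrt (V + 2*lam*C + lam^2*\<sigma>F^2)" if lam: "lam \<ge> 0" for lam
  proof -
    define G where "G = (\<lambda>v. \<gamma> v + lam * Q v)"
    have EG: "EU G = 1 + lam * m1"
      using mm.lin[of 0 lam 1] unfolding G_def m1_def \<gamma>_int by (simp add: add.commute)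
    have qpos: "V + 2*lam*C + lam^2*\<sigma>F^2 > 0" using Vpos lam Cnn by (simp add: add_pos_nonneg)
    have VG: "varU G = V + 2*lam*C + lam^2*\<sigma>F^2"
    proof -
      have "varU G = EU (\<lambda>u. ((-1 - lam*m1) + lam*Q u + 1*\<gamma> u)^2)"
        unfolding varU_def covU_def EG by (simp add: G_def power2_eq_square algebra_simps)
      then show ?thesis using vq by simp
    qed
    define s where "s = stdU G"
    have s: "s > 0" "s^2 = V + 2*lam*C + lam^2*\<sigma>F^2"
      unfolding s_def stdU_def VG using qpos by auto
    define k where "k = \<sigma> / s"
    have pt: "Q u - hfun \<gamma> Q \<mu> \<sigma> lam u = (- \<mu> + k*(1 + lam*m1)) + (1 - k*lam) * Q u + (- k) * \<gamma> u" for u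
      unfolding hfun_def Let_def G_def[symmetric] EG s_def[symmetric] k_def using s(1)
      by (simp add: field_simps G_def)
    have int: "(LBINT u:{0<..<1}. (Q u - hfun \<gamma> Q \<mu> \<sigma> lam u)^2) = (m1-\<mu>)^2 + \<sigma>F^2 + \<sigma>^2 - 2*\<sigma>*(C+lam*\<sigma>F^2)/s"
    proof -
      have "(LBINT u:{0<..<1}. (Q u - hfun \<gamma> Q \<mu> \<sigma> lam u)^2) = EU (\<lambda>u. ((- \<mu> + k*(1 + lam*m1)) + (1 - k*lam) * Q u + (- k) * \<gamma> u)^2)"
        unfolding EU_def pt ..
      also have "\<dots> = (m1-\<mu>)^2 + \<sigma>F^2 + \<sigma>^2 - 2*\<sigma>*(C+lam*\<sigma>F^2)/s"
        unfolding mm.quad2 \<gamma>_int m1_def[symmetric] m2_def[symmetric] p_def[symmetric] g2_def[symmetric] k_def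
        by (rule dW_alg[OF s]) (use S2 Ve Ce in auto)
      finally show ?thesis .
    qed
    have nn: "0 \<le> (LBINT u:{0<..<1}. (Q u - hfun \<gamma> Q \<mu> \<sigma> lam u)^2)"
      unfolding EU_def[symmetric] pt by (rule mm.sqnn)
    have "(dW Q (hfun \<gamma> Q \<mu> \<sigma> lam))^2 = (m1-\<mu>)^2 + \<sigma>F^2 + \<sigma>^2 - 2*\<sigma>*(C+lam*\<sigma>F^2)/s"
      unfolding dW_def using nn int by simp
    also have "\<dots> = \<epsilon> \<longleftrightarrow> \<sigma>*(C + lam*\<sigma>F^2) = K * s"
    proof -
      have a: "(m1-\<mu>)^2 + \<sigma>F^2 + \<sigma>^2 - 2*\<sigma>*(C+lam*\<sigma>F^2)/s = \<epsilon> \<longleftrightarrow> 2*\<sigma>*(C+lam*\<sigma>F^2)/s = 2*K"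
        using K2 unfolding m1e by linarith
      have b: "2*\<sigma>*(C+lam*\<sigma>F^2)/s = 2*K \<longleftrightarrow> \<sigma>*(C + lam*\<sigma>F^2) = K * s"
        using s(1) by (simp add: field_simps) argo
      show ?thesis using a b by simp
    qed
    finally show ?thesis unfolding s_def stdU_def VG .
  qed
  show ?thesis
    unfolding Let_def
    using K0 sol(1) sol(2) sol(3) dWe by auto
qed


end
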